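(* Let $n \ge 2$ and let $(G(k))_{k \in \mathbb{N}}$, $G(k)=(\mathcal{V},\mathcal{E}(k))$, be a sequence of digraphs on $\mathcal{V}=\{1,\dots,n\}$, with knowledge sets $\mathcal{K}_i(k)$ evolving by the flooding update described in the context. Fix a node $q \in \mathcal{V}$. Suppose that for every $k \in \{0,1,\dots,n-2\}$ there exists an input-cord $\mathcal{I}^q(k)$ to node $q$ at time $k$ with $|\mathcal{I}^q(k)| \ge n-k-1$. Then $|\mathcal{K}_q(k+1)| \ge k+2$ for every $k \in \{0,1,\dots,n-2\}$.
   Context: Network: $\mathcal{V}=\{1,\dots,n\}$; each node $i$ holds initial data $d_i \in \mathbb{R}$, with $d_i \neq d_j$ for $i\neq j$. Communication happens at discrete times $k \in \mathbb{N}$ along a time-varying digraph $G(k)=(\mathcal{V},\mathcal{E}(k))$; node $i$ sends to node $j$ at time $k$ iff $(i,j)\in\mathcal{E}(k)$. Knowledge sets: $\mathcal{K}_i(0)=\{d_i\}$, and (flooding update) each node's knowledge at time $k+1$ is its knowledge at time $k$ together with the full knowledge at time $k$ of every node sending to it: $\mathcal{K}_j(k+1)=\mathcal{K}_j(k)\cup\bigcup_{i:(i,j)\in\mathcal{E}(k)}\mathcal{K}_i(k)$. Input-cord: for a node $i$ and time $k$, an input-cord to $i$ is an ordered list $\mathcal{I}^i(k)=(\mathcal{I}^i_1(k),\dots,\mathcal{I}^i_m(k))$ of pairwise distinct nodes of $\mathcal{V}\setminus\{i\}$ such that $(\mathcal{I}^i_j(k),\mathcal{I}^i_{j+1}(k))\in\mathcal{E}(k)$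 for all $j\in\{1,\dots,m-1\}$ and $(\mathcal{I}^i_m(k),i)\in\mathcal{E}(k)$; its cardinality is $|\mathcal{I}^i(k)|=m$. *)

theory Defs
  imports Main "HOL.Real"
begin

text \<open>Nodes are the naturals 1..n; E k is the edge set of the digraph G(k);
  d i is the initial datum of node i.  Knowledge sets under flooding.\<close>

primrec knowledge :: "(nat \<Rightarrow> (nat \<times> nat) set) \<Rightarrow> (nat \<Rightarrow> real) \<Rightarrow> nat \<Rightarrow> nat \<Rightarrow> real set" where
  "knowledge E d j 0 = {d j}"
| "knowledge E d j (Suc k) =
     knowledge E d j k \<union> (\<Union>i\<in>{i. (i, j) \<in> E k}. knowledge E d i k)"

definition input_cord ::
  "nat set \<Rightarrow> (nat \<Rightarrow> (nat \<times> nat) set) \<Rightarrow> nat \<Rightarrow> nat \<Rightarrow> nat list \<Rightarrow> bool" where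
  "input_cord V E i k cs \<longleftrightarrow>
     cs \<noteq> [] \<and> distinct cs \<and> set cs \<subseteq> V - {i} \<and>
     (\<forall>j. Suc j < length cs \<longrightarrow> (cs ! j, cs ! Suc j) \<in> E k) \<and>
     (last cs, i) \<in> E k"

end

theory Submission
  imports Defs
begin

lemma knowledge_finite:
  assumes "\<And>k. E k \<subseteq> {1..n} \<times> {1..n}"
  shows "finite (knowledge E d j k)"
proof (induction k arbitrary: j)
  case 0 then show ?case by simp
next
  case (Suc k)
  have "{i. (i, j) \<in> E k} \<subseteq> {1..n}" using assms by blast
  then have "finite {i. (i, j) \<in> E k}" using finite_subset by blast
  then show ?case using Suc by simp
qed

lemma cord_closed:
  assumes "input_cord V E q k cs" and "last cs \<in> S"
    and "\<And>i. Suc i < length cs \<Longrightarrow> cs ! Suc i \<in> S \<Longrightarrow> cs ! i \<in> S"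
  shows "set cs \<subseteq> S"
proof -
  have ne: "cs \<noteq> []" using assms(1) by (simp add: input_cord_def)
  have "\<forall>i. length cs - 1 - i = t \<longrightarrow> i < length cs \<longrightarrow> cs ! i \<in> S" for t
  proof (induction t)
    case 0
    show ?case
    proof (intro allI impI)
      fix i assume "length cs - 1 - i = 0" "i < length cs"
      then have "i = length cs - 1" by arith
      then show "cs ! i \<in> S" using assms(2) ne by (simp add: last_conv_nth)
    qed
  next
    case (Suc t)
    show ?case
    proof (intro allI impI)
      fix i assume h: "length cs - 1 - i = Suc t" "i < length cs"
      then have "Suc i < length cs" by arith
      moreover have "length cs - 1 - Suc i = t" using h by arith
      moreover have "cs ! Suc i \<in> S" using Suc.IH \<open>Suc i < length cs\<close> calculation(2) by blast
      ultimately show "cs ! i \<in> S" using assms(3) by blast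
    qed
  qed
  then show ?thesis by (auto simp: in_set_conv_nth)
qed

theorem lemma1:
  fixes n q :: nat and E :: "nat \<Rightarrow> (nat \<times> nat) set" and d :: "nat \<Rightarrow> real"
  assumes "n \<ge> 2"
    and "\<And>k. E k \<subseteq> {1..n} \<times> {1..n}"
    and "inj_on d {1..n}"
    and "q \<in> {1..n}"
    and "\<And>k. k \<le> n - 2 \<Longrightarrow>
           \<exists>cs. input_cord {1..n} E q k cs \<and> length cs \<ge> n - k - 1"
  shows "\<forall>k \<le> n - 2. card (knowledge E d q (k + 1)) \<ge> k + 2"
proof -
  let ?V = "{1..n}"
  let ?U = "\<lambda>S k. \<Union>j\<in>S. knowledge E d j k"
  have finU: "finite (?U S k)" if "S \<subseteq> ?V" for S k
    using that knowledge_finite[OF assms(2)] finite_subset[of S ?V] by auto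
  have main: "k \<le> n - 1 \<Longrightarrow> \<forall>S. q \<in> S \<longrightarrow> S \<subseteq> ?V \<longrightarrow> card (?U S k) \<ge> min n (k + card S)" for k
  proof (induction k)
    case 0
    show ?case
    proof (intro allI impI)
      fix S :: "nat set" assume "q \<in> S" "S \<subseteq> ?V"
      have "?U S 0 = d ` S" by auto
      moreover have "inj_on d S" using assms(3) \<open>S \<subseteq> ?V\<close> inj_on_subset by blast
      ultimately show "card (?U S 0) \<ge> min n (0 + card S)" by (simp add: card_image)
    qed
  next
    case (Suc k)
    then have kle: "k \<le> n - 2" by arith
    obtain cs where cs: "input_cord ?V E q k cs" "length cs \<ge> n - k - 1"
      using assms(5)[OF kle] by blast
    have csV: "set cs \<subseteq> ?V - {q}" and ne: "cs \<noteq> []" and dist: "distinct cs"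
      and lastE: "(last cs, q) \<in> E k"
      and pathE: "\<And>j. Suc j < length cs \<Longrightarrow> (cs ! j, cs ! Suc j) \<in> E k"
      using cs(1) by (auto simp: input_cord_def)
    show ?case
    proof (intro allI impI)
      fix S :: "nat set" assume qS: "q \<in> S" and SV: "S \<subseteq> ?V"
      define T where "T = S \<union> {last cs} \<union> {cs ! i | i. Suc i < length cs \<and> cs ! Suc i \<in> S}"
      have lastV: "last cs \<in> ?V" using csV ne last_in_set by blast
      have TV: "T \<subseteq> ?V"
      proof -
        have "cs ! i \<in> ?V" if "Suc i < length cs" for i
        proof -
          have "cs ! i \<in> set cs" using that by simp
          then show ?thesis using csV by (meson DiffD1 subsetD)
        qed
        then show ?thesis using SV lastV unfolding T_def by blast
      qed
      have sub: "?U T k \<subseteq> ?U S (Suc k)"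
      proof
        fix x assume "x \<in> ?U T k"
        then obtain j where j: "j \<in> T" "x \<in> knowledge E d j k" by blast
        show "x \<in> ?U S (Suc k)"
        proof (cases "j \<in> S")
          case True then show ?thesis using j by auto
        next
          case False
          show ?thesis
          proof (cases "j = last cs")
            case True
            then show ?thesis using j lastE qS by (auto intro!: bexI[of _ q])
          next
            case False
            with \<open>j \<notin> S\<close> j(1) obtain i where i: "j = cs ! i" "Suc i < length cs" "cs ! Suc i \<in> S"
              unfolding T_def by blast
            then show ?thesis using j pathE[OF i(2)] by (auto intro!: bexI[of _ "cs ! Suc i"])
          qed
        qed
      qed
      have IH: "card (?U T k) \<ge> min n (k + card T)"
      proof -
        have "q \<in> T" unfolding T_def using qS by blast
        moreover have "k \<le> n - 1" using Suc.prems by arith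
        ultimately show ?thesis using Suc.IH TV by blast
      qed
      have finS: "finite S" using SV finite_subset by blast
      have finT: "finite T" using TV finite_subset by blast
      have ST: "S \<subseteq> T" unfolding T_def by blast
      have cardle: "card (?U T k) \<le> card (?U S (Suc k))"
        using card_mono[OF finU[OF SV] sub] .
      show "card (?U S (Suc k)) \<ge> min n (Suc k + card S)"
      proof (cases "T = S")
        case False
        then have "card S < card T" using ST finT psubset_card_mono by blast
        then show ?thesis using IH cardle by linarith
      next
        case True
        have "set cs \<subseteq> S"
        proof (rule cord_closed[OF cs(1)])
          show "last cs \<in> S" using True unfolding T_def by blast
          fix i assume "Suc i < length cs" "cs ! Suc i \<in> S"
          then show "cs ! i \<in> S" using True unfolding T_def by blast
        qed
        then have "insert q (set cs) \<subseteq> S" using qS by blast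
        then have "card (insert q (set cs)) \<le> card S" using finS card_mono by blast
        moreover have "card (insert q (set cs)) = length cs + 1"
        proof -
          have "q \<notin> set cs" using csV by blast
          then show ?thesis using dist by (simp add: distinct_card)
        qed
        ultimately have "card S \<ge> n - k" using cs(2) kle by linarith
        then have "min n (k + card S) = n" using kle by linarith
        then have "min n (k + card T) = n" using True by simp
        then have "card (?U S (Suc k)) \<ge> n" using IH cardle by linarith
        then show ?thesis by (simp add: min_le_iff_disj)
      qed
    qed
  qed
  show ?thesis
  proof (intro allI impI)
    fix k assume "k \<le> n - 2"
    then have "k + 1 \<le> n - 1" using assms(1) by arith
    then have "card (?U {q} (k+1)) \<ge> min n (k + 1 + card {q})"
      using main[of "k+1"] assms(4) by blast
    then show "card (knowledge E d q (k + 1)) \<ge> k + 2" using \<open>k \<le> n - 2\<close> assms(1) by simp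
  qed
qed

end
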